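(* Let $K=2$ and let $(X_{t,1},X_{t,2})$ have joint density $p_{\mathcal{X}}$ on $\mathbb{R}^{2d}$ satisfying the relaxed symmetry condition with constant $\nu$. Then for every fixed vector $\beta\in\mathbb{R}^d$, $$\sum_{i=1}^2\mathbb{E}_{\mathcal{X}_t}\Big[X_{t,i}X_{t,i}^\top\mathbb{1}\{X_{t,i}=\arg\max_{X\in\mathcal{X}_t}X^\top\beta\}\Big]\succcurlyeq\nu^{-1}\Sigma,$$ where $\Sigma=\frac12\mathbb{E}[X_{t,1}X_{t,1}^\top+X_{t,2}X_{t,2}^\top]$.
   Context: $\mathcal{X}_t=\{X_{t,1},X_{t,2}\}\subset\mathbb{R}^d$, features bounded ($\|X_{t,i}\|_2\le x_{\max}$). Relaxed symmetry: there is $\nu<\infty$ with $p_{\mathcal{X}}(-\mathbf{x})/p_{\mathcal{X}}(\mathbf{x})\le\nu$ for all $\mathbf{x}\in\mathbb{R}^{2d}$. $\succcurlyeq$ is the Loewner (positive semidefinite) order. *)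

theory Defs
  imports "HOL-Analysis.Analysis"
begin

definition outer :: "real^'d \<Rightarrow> real^'d^'d" where
  "outer x = (\<chi> j k. x $ j * x $ k)"

definition psd :: "real^'d^'d \<Rightarrow> bool" where
  "psd A \<longleftrightarrow> transpose A = A \<and> (\<forall>v. 0 \<le> v \<bullet> (A *v v))"

definition loewner_ge :: "real^'d^'d \<Rightarrow> real^'d^'d \<Rightarrow> bool" where
  "loewner_ge A B \<longleftrightarrow> psd (A - B)"

text \<open>Entrywise expectation of a matrix-valued function of (X_1,X_2) whose
  joint Lebesgue density on R^d x R^d = R^{2d} is p.\<close>
definition mat_expect ::
  "((real^'d) \<times> (real^'d) \<Rightarrow> real) \<Rightarrow> ((real^'d) \<times> (real^'d) \<Rightarrow> real^'d^'d) \<Rightarrow> real^'d^'d" where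
  "mat_expect p F = (\<chi> j k. \<integral> z. p z * (F z $ j $ k) \<partial>lborel)"

end

theory Submission
  imports Defs
begin

lemma lborel_distr_uminus_eucl: "distr lborel borel uminus = (lborel :: 'a::euclidean_space measure)"
  by (subst lborel_affine[of "-1" 0]) (auto simp: density_1 one_ennreal_def[symmetric])

lemma integral_reflect:
  fixes f :: "'a::euclidean_space \<Rightarrow> real"
  assumes "f \<in> borel_measurable borel"
  shows "(\<integral>x. f (-x) \<partial>lborel) = (\<integral>x. f x \<partial>lborel)"
  using integral_distr[of uminus lborel borel f] assms unfolding lborel_distr_uminus_eucl by simp

lemma integrable_reflect:
  fixes f :: "'a::euclidean_space \<Rightarrow> real"
  assumes "integrable lborel f"
  shows "integrable lborel (\<lambda>x. f (-x))"
proof -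
  have m: "f \<in> borel_measurable borel" using assms by (simp add: borel_measurable_integrable)
  show ?thesis using integrable_distr_eq[of uminus lborel borel f] m assms unfolding lborel_distr_uminus_eucl by simp
qed

lemma qf_pointwise:
  "p * (v \<bullet> (M *v v)) = (\<Sum>j\<in>UNIV. \<Sum>k\<in>UNIV. (v$j * v$k) * (p * (M $ j $ k)))"
  by (simp add: inner_vec_def matrix_vector_mult_def sum_distrib_left mult_ac)

lemma qf_int:
  fixes p :: "'a::euclidean_space \<Rightarrow> real" and F :: "'a \<Rightarrow> real^'d^'d"
  assumes "\<And>j k. integrable lborel (\<lambda>z. p z * (F z $ j $ k))"
  shows "integrable lborel (\<lambda>z. p z * (v \<bullet> (F z *v v)))"
  unfolding qf_pointwise using assms by (auto intro!: integrable_sum integrable_mult_right)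

lemma qf_expect:
  fixes p :: "(real^'d) \<times> (real^'d) \<Rightarrow> real" and F :: "(real^'d) \<times> (real^'d) \<Rightarrow> real^'d^'d"
  assumes "\<And>j k. integrable lborel (\<lambda>z. p z * (F z $ j $ k))"
  shows "v \<bullet> (mat_expect p F *v v) = (\<integral>z. p z * (v \<bullet> (F z *v v)) \<partial>lborel)"
proof -
  have "(\<integral>z. p z * (v \<bullet> (F z *v v)) \<partial>lborel) =
     (\<integral>z. (\<Sum>j\<in>UNIV. \<Sum>k\<in>UNIV. (v$j * v$k) * (p z * (F z $ j $ k))) \<partial>lborel)"
    unfolding qf_pointwise ..
  also have "\<dots> = (\<Sum>j\<in>UNIV. \<Sum>k\<in>UNIV. (v$j * v$k) * (\<integral>z. p z * (F z $ j $ k) \<partial>lborel))"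
    using assms by (simp add: integral_sum integrable_sum)
  also have "\<dots> = v \<bullet> (mat_expect p F *v v)"
    by (simp add: inner_vec_def matrix_vector_mult_def mat_expect_def sum_distrib_left mult_ac)
  finally show ?thesis ..
qed

lemma ent_int:
  fixes p :: "'a::euclidean_space \<Rightarrow> real"
  assumes "integrable lborel p" "\<And>z. 0 \<le> p z" "(\<lambda>z. f z) \<in> borel_measurable borel"
    "\<And>z. 0 < p z \<Longrightarrow> \<bar>f z\<bar> \<le> C"
  shows "integrable lborel (\<lambda>z. p z * f z)"
proof -
  have i: "integrable lborel (\<lambda>z. C * p z)" using assms(1) by simp
  have m: "(\<lambda>z. p z * f z) \<in> borel_measurable lborel" using assms(1,3) by (simp add: borel_measurable_integrable)
  have ae: "AE x in lborel. norm (p x * f x) \<le> norm (C * p x)"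
  proof (rule AE_I2)
    fix x show "norm (p x * f x) \<le> norm (C * p x)"
    proof (cases "p x = 0")
      case False
      then have "0 < p x" using assms(2)[of x] by simp
      then have "p x * \<bar>f x\<bar> \<le> p x * C" using assms(4) by (simp add: mult_left_mono)
      moreover have "C * p x \<le> \<bar>C\<bar> * p x" using assms(2)[of x] by (simp add: mult_right_mono)
      ultimately show ?thesis using assms(2)[of x] by (simp add: abs_mult mult_ac)
    qed simp
  qed
  show ?thesis by (rule Bochner_Integration.integrable_bound[OF i m ae])
qed

lemma outer_qf: "v \<bullet> (outer x *v v) = (v \<bullet> x)^2"
  by (simp add: outer_def inner_vec_def matrix_vector_mult_def power2_eq_square sum_product mult_ac sum_distrib_left)

lemma outer_bound: "norm x \<le> c \<Longrightarrow> \<bar>outer x $ j $ k\<bar> \<le> c^2"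
proof -
  assume a: "norm x \<le> c"
  have "\<bar>x$j\<bar> \<le> c" "\<bar>x$k\<bar> \<le> c" using component_le_norm_cart[of x] a by (meson order_trans)+
  then show ?thesis by (simp add: outer_def abs_mult power2_eq_square mult_mono')
qed

theorem lemma2:
  fixes p :: "(real^'d) \<times> (real^'d) \<Rightarrow> real"
    and \<nu> x_max :: real
    and \<beta> :: "real^'d"
  assumes p_meas: "p \<in> borel_measurable lborel"
    and p_nonneg: "\<And>z. 0 \<le> p z"
    and p_int: "integrable lborel p"
    and p_one: "(\<integral> z. p z \<partial>lborel) = 1"
    and bounded: "\<And>x1 x2. 0 < p (x1, x2) \<Longrightarrow> norm x1 \<le> x_max \<and> norm x2 \<le> x_max"
    and nu_pos: "0 < \<nu>"
    and relaxed_sym: "\<And>x1 x2. p (-x1, -x2) \<le> \<nu> * p (x1, x2)"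
  shows "loewner_ge
     (mat_expect p (\<lambda>(x1, x2). if x1 \<bullet> \<beta> \<ge> x2 \<bullet> \<beta> then outer x1 else 0)
      + mat_expect p (\<lambda>(x1, x2). if x2 \<bullet> \<beta> \<ge> x1 \<bullet> \<beta> then outer x2 else 0))
     ((1 / \<nu>) *\<^sub>R ((1/2) *\<^sub>R mat_expect p (\<lambda>(x1, x2). outer x1 + outer x2)))"
proof -
  define F1 :: "(real^'d) \<times> (real^'d) \<Rightarrow> real^'d^'d" where
    "F1 = (\<lambda>(x1, x2). if x1 \<bullet> \<beta> \<ge> x2 \<bullet> \<beta> then outer x1 else 0)"
  define F2 :: "(real^'d) \<times> (real^'d) \<Rightarrow> real^'d^'d" where
    "F2 = (\<lambda>(x1, x2). if x2 \<bullet> \<beta> \<ge> x1 \<bullet> \<beta> then outer x2 else 0)"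
  define F3 :: "(real^'d) \<times> (real^'d) \<Rightarrow> real^'d^'d" where
    "F3 = (\<lambda>(x1, x2). outer x1 + outer x2)"
  have e1: "F1 z $ j $ k = (if snd z \<bullet> \<beta> \<le> fst z \<bullet> \<beta> then fst z $ j * fst z $ k else 0)" for z j k
    by (cases z) (simp add: F1_def outer_def)
  have e2: "F2 z $ j $ k = (if fst z \<bullet> \<beta> \<le> snd z \<bullet> \<beta> then snd z $ j * snd z $ k else 0)" for z j k
    by (cases z) (simp add: F2_def outer_def)
  have e3: "F3 z $ j $ k = fst z $ j * fst z $ k + snd z $ j * snd z $ k" for z j k
    by (cases z) (simp add: F3_def outer_def)
  have bnd: "norm (fst z) \<le> x_max \<and> norm (snd z) \<le> x_max" if "0 < p z" for z
    using bounded[of "fst z" "snd z"] that by simp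
  have ob: "\<bar>x $ j * x $ k\<bar> \<le> x_max^2" if "norm x \<le> x_max" for x :: "real^'d" and j k
    using outer_bound[OF that, of j k] by (simp add: outer_def)
  have mf1[measurable]: "(\<lambda>x::(real^'d)\<times>(real^'d). fst x $ j) \<in> borel_measurable borel" for j
    by (intro borel_measurable_continuous_onI continuous_intros)
  have mf2[measurable]: "(\<lambda>x::(real^'d)\<times>(real^'d). snd x $ j) \<in> borel_measurable borel" for j
    by (intro borel_measurable_continuous_onI continuous_intros)
  have mf3[measurable]: "(\<lambda>x::(real^'d)\<times>(real^'d). fst x \<bullet> \<beta>) \<in> borel_measurable borel"
    by (intro borel_measurable_continuous_onI continuous_intros)
  have mf4[measurable]: "(\<lambda>x::(real^'d)\<times>(real^'d). snd x \<bullet> \<beta>) \<in> borel_measurable borel"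
    by (intro borel_measurable_continuous_onI continuous_intros)
  have int1: "integrable lborel (\<lambda>z. p z * (F1 z $ j $ k))" for j k
  proof (rule ent_int[OF p_int p_nonneg, where C="x_max^2"])
    show "(\<lambda>z. F1 z $ j $ k) \<in> borel_measurable borel" unfolding e1 by measurable
    show "\<bar>F1 z $ j $ k\<bar> \<le> x_max^2" if "0 < p z" for z
      using bnd[OF that] ob by (simp add: e1)
  qed
  have int2: "integrable lborel (\<lambda>z. p z * (F2 z $ j $ k))" for j k
  proof (rule ent_int[OF p_int p_nonneg, where C="x_max^2"])
    show "(\<lambda>z. F2 z $ j $ k) \<in> borel_measurable borel" unfolding e2 by measurable
    show "\<bar>F2 z $ j $ k\<bar> \<le> x_max^2" if "0 < p z" for z
      using bnd[OF that] ob by (simp add: e2)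
  qed
  have int3: "integrable lborel (\<lambda>z. p z * (F3 z $ j $ k))" for j k
  proof (rule ent_int[OF p_int p_nonneg, where C="2 * x_max^2"])
    show "(\<lambda>z. F3 z $ j $ k) \<in> borel_measurable borel" unfolding e3 by measurable
    show "\<bar>F3 z $ j $ k\<bar> \<le> 2 * x_max^2" if "0 < p z" for z
      using bnd[OF that] ob[of "fst z" j k] ob[of "snd z" j k] by (simp add: e3 abs_triangle_ineq[THEN order_trans])
  qed
  define M1 where "M1 = mat_expect p F1"
  define M2 where "M2 = mat_expect p F2"
  define M3 where "M3 = mat_expect p F3"
  have t1: "F1 z $ j $ k = F1 z $ k $ j" for z j k by (simp add: e1 mult.commute)
  have s1: "M1 $ j $ k = M1 $ k $ j" for j k unfolding M1_def mat_expect_def by (simp add: t1[of _ j k])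
  have t2: "F2 z $ j $ k = F2 z $ k $ j" for z j k by (simp add: e2 mult.commute)
  have s2: "M2 $ j $ k = M2 $ k $ j" for j k unfolding M2_def mat_expect_def by (simp add: t2[of _ j k])
  have t3: "F3 z $ j $ k = F3 z $ k $ j" for z j k by (simp add: e3 mult.commute)
  have s3: "M3 $ j $ k = M3 $ k $ j" for j k unfolding M3_def mat_expect_def by (simp add: t3[of _ j k])
  have sym: "transpose (M1 + M2 - (1 / \<nu>) *\<^sub>R ((1/2) *\<^sub>R M3)) = M1 + M2 - (1 / \<nu>) *\<^sub>R ((1/2) *\<^sub>R M3)"
    by (simp add: vec_eq_iff transpose_def s1 s2 s3)
  have mcont: "(\<lambda>x::(real^'d)\<times>(real^'d). f x) \<in> borel_measurable borel" if "continuous_on UNIV f" for f :: "_ \<Rightarrow> real"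
    using borel_measurable_continuous_onI[OF that] by simp
  have mneg[measurable]: "(uminus :: (real^'d)\<times>(real^'d) \<Rightarrow> _) \<in> borel_measurable borel"
    by (intro borel_measurable_continuous_onI continuous_intros)
  have q: "0 \<le> v \<bullet> ((M1 + M2 - (1 / \<nu>) *\<^sub>R ((1/2) *\<^sub>R M3)) *v v)" for v
  proof -
    have mf5[measurable]: "(\<lambda>x::(real^'d)\<times>(real^'d). v \<bullet> fst x) \<in> borel_measurable borel"
      by (intro borel_measurable_continuous_onI continuous_intros)
    have mf6[measurable]: "(\<lambda>x::(real^'d)\<times>(real^'d). v \<bullet> snd x) \<in> borel_measurable borel"
      by (intro borel_measurable_continuous_onI continuous_intros)
    define a where "a z = (if snd z \<bullet> \<beta> \<le> fst z \<bullet> \<beta> then (v \<bullet> fst z)^2 else 0)" for z :: "(real^'d)\<times>(real^'d)"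
    define b where "b z = (if fst z \<bullet> \<beta> \<le> snd z \<bullet> \<beta> then (v \<bullet> snd z)^2 else 0)" for z :: "(real^'d)\<times>(real^'d)"
    define h where "h z = (v \<bullet> fst z)^2 + (v \<bullet> snd z)^2" for z :: "(real^'d)\<times>(real^'d)"
    define g where "g z = a z + b z" for z
    have qa: "v \<bullet> (F1 z *v v) = a z" for z by (cases z) (simp add: F1_def a_def outer_qf)
    have qb: "v \<bullet> (F2 z *v v) = b z" for z by (cases z) (simp add: F2_def b_def outer_qf)
    have qh: "v \<bullet> (F3 z *v v) = h z" for z
      by (cases z) (simp add: F3_def h_def outer_qf matrix_vector_mult_add_rdistrib inner_add_right)
    have ia: "integrable lborel (\<lambda>z. p z * a z)" using qf_int[OF int1, of v] by (simp add: qa)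
    have ib: "integrable lborel (\<lambda>z. p z * b z)" using qf_int[OF int2, of v] by (simp add: qb)
    have ih: "integrable lborel (\<lambda>z. p z * h z)" using qf_int[OF int3, of v] by (simp add: qh)
    have Q1: "v \<bullet> (M1 *v v) = (\<integral>z. p z * a z \<partial>lborel)" using qf_expect[OF int1, of v] by (simp add: M1_def qa)
    have Q2: "v \<bullet> (M2 *v v) = (\<integral>z. p z * b z \<partial>lborel)" using qf_expect[OF int2, of v] by (simp add: M2_def qb)
    have Q3: "v \<bullet> (M3 *v v) = (\<integral>z. p z * h z \<partial>lborel)" using qf_expect[OF int3, of v] by (simp add: M3_def qh)
    have lin: "v \<bullet> ((M1 + M2 - (1 / \<nu>) *\<^sub>R ((1/2) *\<^sub>R M3)) *v v)
       = v \<bullet> (M1 *v v) + v \<bullet> (M2 *v v) - (1 / \<nu>) * ((1/2) * (v \<bullet> (M3 *v v)))"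
      by (simp add: matrix_vector_mult_add_rdistrib matrix_vector_mult_diff_rdistrib inner_add_right
          inner_diff_right scaleR_matrix_vector_assoc[symmetric])
    have ig: "integrable lborel (\<lambda>z. p z * g z)" using Bochner_Integration.integrable_add[OF ia ib] by (simp add: g_def distrib_left)
    have G: "(\<integral>z. p z * a z \<partial>lborel) + (\<integral>z. p z * b z \<partial>lborel) = (\<integral>z. p z * g z \<partial>lborel)"
      using Bochner_Integration.integral_add[OF ia ib] by (simp add: g_def distrib_left)
    have gnn: "0 \<le> g z" for z by (simp add: g_def a_def b_def)
    have hg: "h z \<le> g z + g (-z)" for z by (auto simp: h_def g_def a_def b_def)
    have gh: "g (-z) \<le> h z" for z by (auto simp: h_def g_def a_def b_def)
    have hnn: "0 \<le> h z" for z by (simp add: h_def)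
    have mg[measurable]: "g \<in> borel_measurable borel" unfolding g_def a_def b_def by measurable
    have pm[measurable]: "p \<in> borel_measurable borel" using p_meas by simp
    have ineg: "integrable lborel (\<lambda>z. p z * g (-z))"
    proof -
      have m: "(\<lambda>z. p z * g (-z)) \<in> borel_measurable lborel" by simp
      have ae: "AE z in lborel. norm (p z * g (-z)) \<le> norm (p z * h z)"
        using p_nonneg gh gnn hnn by (auto intro!: AE_I2 mult_left_mono simp: abs_mult)
      show ?thesis by (rule Bochner_Integration.integrable_bound[OF ih m ae])
    qed
    have refl: "(\<integral>z. p (-z) * g z \<partial>lborel) = (\<integral>z. p z * g (-z) \<partial>lborel)"
      using integral_reflect[of "\<lambda>z. p z * g (-z)"] by simp
    have iref: "integrable lborel (\<lambda>z. p (-z) * g z)"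
      using integrable_reflect[OF ineg] by simp
    have le1: "(\<integral>z. p (-z) * g z \<partial>lborel) \<le> (\<integral>z. \<nu> * (p z * g z) \<partial>lborel)"
    proof (rule integral_mono[OF iref Bochner_Integration.integrable_mult_right[OF ig]])
      fix z :: "(real^'d)\<times>(real^'d)"
      have "p (-z) \<le> \<nu> * p z" using relaxed_sym[of "fst z" "snd z"] by (cases z) simp
      then have "p (-z) * g z \<le> (\<nu> * p z) * g z" using gnn[of z] by (rule mult_right_mono)
      then show "p (-z) * g z \<le> \<nu> * (p z * g z)" by (simp add: mult.assoc)
    qed
    have nu1: "1 \<le> \<nu>"
    proof -
      have "1 = (\<integral>z. p (-z) \<partial>lborel)" using integral_reflect[of p] p_one by simp
      also have "\<dots> \<le> (\<integral>z. \<nu> * p z \<partial>lborel)"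
        using integrable_reflect[OF p_int] p_int relaxed_sym
        by (intro integral_mono) auto
      also have "\<dots> = \<nu>" using p_one by simp
      finally show ?thesis .
    qed
    have le2: "(\<integral>z. p z * h z \<partial>lborel) \<le> (\<integral>z. p z * g z + p z * g (-z) \<partial>lborel)"
    proof (rule integral_mono[OF ih Bochner_Integration.integrable_add[OF ig ineg]])
      fix z :: "(real^'d)\<times>(real^'d)"
      have "p z * h z \<le> p z * (g z + g (-z))" using hg[of z] p_nonneg[of z] by (rule mult_left_mono)
      then show "p z * h z \<le> p z * g z + p z * g (-z)" by (simp add: distrib_left)
    qed
    have le3: "(\<integral>z. p z * g z + p z * g (-z) \<partial>lborel) = (\<integral>z. p z * g z \<partial>lborel) + (\<integral>z. p z * g (-z) \<partial>lborel)"
      using Bochner_Integration.integral_add[OF ig ineg] .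
    have Gnn: "0 \<le> (\<integral>z. p z * g z \<partial>lborel)"
      using p_nonneg gnn by (intro integral_nonneg_AE) (auto intro!: AE_I2)
    define GG where "GG = (\<integral>z. p z * g z \<partial>lborel)"
    define HH where "HH = (\<integral>z. p z * h z \<partial>lborel)"
    have "HH \<le> GG + \<nu> * GG" using le1 le2 le3 refl unfolding GG_def HH_def by simp
    also have "\<dots> \<le> 2 * \<nu> * GG"
    proof -
      have "0 \<le> GG" using Gnn unfolding GG_def .
      then have "GG * 1 \<le> GG * \<nu>" using nu1 by (rule mult_left_mono[rotated])
      then show ?thesis by (simp add: algebra_simps)
    qed
    finally have "HH \<le> 2 * \<nu> * GG" .
    then have "(1 / \<nu>) * ((1/2) * HH) \<le> GG" using nu_pos by (simp add: field_simps)
    then show ?thesis unfolding lin Q1 Q2 Q3 G GG_def[symmetric] HH_def[symmetric] by simp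
  qed
  show ?thesis
    using q sym unfolding loewner_ge_def psd_def M1_def M2_def M3_def F1_def F2_def F3_def by simp
qed

end
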